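(* For real parameters $a,b,c,e>-1$ and $d>0$ let $$J_3(a,b,c,d,e)=\iiint\limits_{[0,1]^3}\frac{x^b(1-x)^cy^e(1-y)^az^a(1-z)^c}{(1-z+xyz)^d}\,\mathrm d x\,\mathrm d y\,\mathrm d z$$ (whenever convergent) and $K(a,b,c,d,e)=J_3(a,b,c,d+1,e)/J_3(a,b,c,d,e)$. Then, with $K_1=\log3+\frac{\pi}{\sqrt3}$, $$K(0,0,0,2/3,1/3)=-\frac{K_1-2}{2(K_1-3)}.$$ *)

theory Defs
  imports "HOL-Analysis.Analysis"
begin

definition J3 :: "real \<Rightarrow> real \<Rightarrow> real \<Rightarrow> real \<Rightarrow> real \<Rightarrow> real" where
  "J3 a b c d e =
     (LINT p : {0..1} \<times> {0..1} \<times> {0..1} | lborel.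
        (case p of (x, y, z) \<Rightarrow>
          x powr b * (1 - x) powr c * y powr e * (1 - y) powr a * z powr a * (1 - z) powr c
          / (1 - z + x * y * z) powr d))"

definition K :: "real \<Rightarrow> real \<Rightarrow> real \<Rightarrow> real \<Rightarrow> real \<Rightarrow> real" where
  "K a b c d e = J3 a b c (d + 1) e / J3 a b c d e"

definition K1 :: real where
  "K1 = ln 3 + pi / sqrt 3"

end

theory Submission
  imports Defs
begin

definition Q :: "real \<Rightarrow> real" where
  "Q s = ln (s^2+s+1)/2 + sqrt 3 * arctan ((2 * s+1)/sqrt 3)"

lemma pos3: "(s::real)^2+s+1 > 0"
proof -
  have "(s+1/2)^2 \<ge> 0" by simp
  then show ?thesis by (simp add: power2_eq_square algebra_simps)
qed

lemma Q_deriv: "(Q has_real_derivative (s+2)/(s^2+s+1)) (at s)"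
proof -
  have pos: "s^2+s+1 > 0" by (rule pos3)
  have h: "1 + ((2 * s+1)/sqrt 3)^2 = 4*(s^2+s+1)/3"
      by (simp add: power_divide power2_eq_square field_simps)
  have h2: "3 + (1 + s * 2)^2 = 4*(1 + (s + s^2))" by (simp add: power2_eq_square algebra_simps)
  show ?thesis
    unfolding Q_def using pos
    apply (auto intro!: derivative_eq_intros simp: h field_simps)
    apply (subst divide_eq_eq)
    using h2 apply (simp add: power2_eq_square)
    apply (simp add: h2 power2_eq_square algebra_simps eval_nat_numeral)
    done
qed

lemma Q_vals: "Q 1 - Q 0 = K1/2"
proof -
  have s3: "3 / sqrt 3 = sqrt 3" by (simp add: real_div_sqrt)
  have a1: "arctan (sqrt 3) = pi/3" using arctan_tan[of "pi/3"] tan_60 by simp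
  have a2: "arctan (1/sqrt 3) = pi/6" using arctan_tan[of "pi/6"] tan_30 by simp
  have "Q 1 = ln 3/2 + sqrt 3 * (pi/3)" unfolding Q_def using a1 by (simp add: s3)
  moreover have "Q 0 = sqrt 3 * (pi/6)" unfolding Q_def using a2 by simp
  moreover have "pi / sqrt 3 = pi * sqrt 3 / 3"
  proof -
    have "sqrt 3 * sqrt 3 = (3::real)" by simp
    then show ?thesis by (simp add: field_simps)
  qed
  ultimately show ?thesis unfolding K1_def by (simp only:) (simp add: field_simps)
qed

lemma ftc_nn:
  fixes P R :: "real \<Rightarrow> real"
  assumes "\<And>s. s \<in> {0..1} \<Longrightarrow> (P has_real_derivative R s) (at s)"
    and "\<And>s. s \<in> {0..1} \<Longrightarrow> 0 \<le> R s"
  shows "(\<integral>\<^sup>+s. ennreal (indicator {0..1} s * R s) \<partial>lborel) = ennreal (P 1 - P 0)"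
proof -
  have "(R has_integral (P 1 - P 0)) {0..1}"
    by (rule fundamental_theorem_of_calculus)
       (auto simp: has_real_derivative_iff_has_vector_derivative[symmetric] intro!: has_field_derivative_at_within assms)
  then show ?thesis using nn_integral_has_integral_lebesgue[of "{0..1}" R] assms(2) by simp
qed

lemma ftc_nonneg:
  fixes P R :: "real \<Rightarrow> real"
  assumes "\<And>s. s \<in> {0..1} \<Longrightarrow> (P has_real_derivative R s) (at s)"
    and "\<And>s. s \<in> {0..1} \<Longrightarrow> 0 \<le> R s"
  shows "0 \<le> P 1 - P 0"
proof -
  have "(R has_integral (P 1 - P 0)) {0..1}"
    by (rule fundamental_theorem_of_calculus)
       (auto simp: has_real_derivative_iff_has_vector_derivative[symmetric] intro!: has_field_derivative_at_within assms)
  then show ?thesis using has_integral_nonneg assms(2) by blast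
qed

lemma I1: "(\<integral>\<^sup>+s. ennreal (indicator {0..1} s * (27 * s^2 * (1-s) / (s^2+s+1))) \<partial>lborel)
   = ennreal (27 * (3 - K1) / 2) \<and> 0 \<le> 27 * (3 - K1) / 2"
proof -
  define P where "P s = 27 * (2 * s - s^2/2 - Q s)" for s
  have "(P has_real_derivative (27 * s^2 * (1-s) / (s^2+s+1))) (at s)" for s
  proof -
    have pos: "s^2+s+1 > 0" by (rule pos3)
    have "(P has_real_derivative 27 * (2 - s - (s+2)/(s^2+s+1))) (at s)"
      unfolding P_def by (auto intro!: derivative_eq_intros Q_deriv)
    moreover have "27 * (2 - s - (s+2)/(s^2+s+1)) = 27 * s^2 * (1-s) / (s^2+s+1)"
      using pos by (simp add: field_simps power2_eq_square)
    ultimately show ?thesis by (simp only:)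
  qed
  note D = this
  have N: "s \<in> {0..1} \<Longrightarrow> 0 \<le> 27 * s^2 * (1-s) / (s^2+s+1)" for s :: real
    using pos3[of s] by auto
  have nn: "0 \<le> P 1 - P 0" using D N by (intro ftc_nonneg) auto
  have "(\<integral>\<^sup>+s. ennreal (indicator {0..1} s * (27 * s^2 * (1-s) / (s^2+s+1))) \<partial>lborel) = ennreal (P 1 - P 0)"
    using D N by (intro ftc_nn) auto
  also have e: "P 1 - P 0 = 27 * (3 - K1) / 2" using Q_vals unfolding P_def by (simp add: algebra_simps)
  finally show ?thesis using nn e by simp
qed

lemma I2: "(\<integral>\<^sup>+s. ennreal (indicator {0..1} s * (27/2 * (1 - s^2) / (s^2+s+1))) \<partial>lborel)
   = ennreal (27 * (K1 - 2) / 4) \<and> 0 \<le> 27 * (K1 - 2) / 4"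
proof -
  define P where "P s = 27/2 * (Q s - s)" for s
  have "(P has_real_derivative (27/2 * (1 - s^2) / (s^2+s+1))) (at s)" for s
  proof -
    have pos: "s^2+s+1 > 0" by (rule pos3)
    have "(P has_real_derivative 27/2 * ((s+2)/(s^2+s+1) - 1)) (at s)"
      unfolding P_def by (auto intro!: derivative_eq_intros Q_deriv)
    moreover have "27/2 * ((s+2)/(s^2+s+1) - 1) = 27/2 * (1 - s^2) / (s^2+s+1)"
      using pos by (simp add: field_simps power2_eq_square)
    ultimately show ?thesis by (simp only:)
  qed
  note D = this
  have N: "s \<in> {0..1} \<Longrightarrow> 0 \<le> 27/2 * (1 - s^2) / (s^2+s+1)" for s :: real
    using pos3[of s] by (auto simp: power_le_one)
  have nn: "0 \<le> P 1 - P 0" using D N by (intro ftc_nonneg) auto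
  have "(\<integral>\<^sup>+s. ennreal (indicator {0..1} s * (27/2 * (1 - s^2) / (s^2+s+1))) \<partial>lborel) = ennreal (P 1 - P 0)"
    using D N by (intro ftc_nn) auto
  also have e: "P 1 - P 0 = 27 * (K1 - 2) / 4" proof -
    have q: "Q 1 = Q 0 + K1/2" using Q_vals by simp
    show ?thesis unfolding P_def q by (simp add: field_simps)
  qed
  finally show ?thesis using nn e by simp
qed

lemma ftc_nn_ab:
  fixes P R :: "real \<Rightarrow> real"
  assumes "a \<le> b" "\<And>s. s \<in> {a..b} \<Longrightarrow> (P has_real_derivative R s) (at s)"
    and "\<And>s. s \<in> {a..b} \<Longrightarrow> 0 \<le> R s"
  shows "(\<integral>\<^sup>+s. ennreal (indicator {a..b} s * R s) \<partial>lborel) = ennreal (P b - P a)"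
proof -
  have "(R has_integral (P b - P a)) {a..b}"
    by (rule fundamental_theorem_of_calculus)
       (auto simp: has_real_derivative_iff_has_vector_derivative[symmetric] intro!: has_field_derivative_at_within assms)
  then show ?thesis using nn_integral_has_integral_lebesgue[of "{a..b}" R] assms(3) by simp
qed

definition G :: "real \<Rightarrow> real \<Rightarrow> real" where
  "G d t = (1 - t powr (1-d)) / ((1-t)*(1-d))"

lemma Zint:
  fixes d t :: real
  assumes t: "0 < t" "t < 1" and d: "d \<noteq> 1"
  shows "(\<integral>\<^sup>+z. ennreal (indicator {0..1} z * (1 - (1-t)*z) powr (-d)) \<partial>lborel) = ennreal (G d t)"
proof -
  define H where "H z = (1 - (1-t)*z) powr (1-d) / (-((1-t)*(1-d)))" for z
  have b: "1 - (1-t)*z > 0" if "z \<in> {0..1}" for z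
  proof -
    have "(1-t)*z \<le> (1-t)" using that t by (auto intro: mult_left_le)
    then show ?thesis using t by linarith
  qed
  have "(H has_real_derivative (1 - (1-t)*z) powr (-d)) (at z)" if "z \<in> {0..1}" for z
  proof -
    have "(H has_real_derivative (1-d) * (1 - (1-t)*z) powr (1-d-1) * (-(1-t)) / (-((1-t)*(1-d)))) (at z)"
      unfolding H_def using b[OF that] t
      by (auto intro!: derivative_eq_intros)
    moreover have "(1-d) * (1 - (1-t)*z) powr (1-d-1) * (-(1-t)) / (-((1-t)*(1-d))) = (1 - (1-t)*z) powr (-d)"
    proof -
      have aux: "a \<noteq> 0 \<Longrightarrow> b \<noteq> 0 \<Longrightarrow> a * w * (-b) / (-(b*a)) = (w::real)" for a b w
        by (simp add: field_simps)
      have "1-d-1 = -d" by simp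
      then show ?thesis using aux[of "1-d" "1-t" "(1 - (1-t)*z) powr (-d)"] t d by simp
    qed
    ultimately show ?thesis by (simp only:)
  qed
  then have "(\<integral>\<^sup>+z. ennreal (indicator {0..1} z * (1 - (1-t)*z) powr (-d)) \<partial>lborel) = ennreal (H 1 - H 0)"
    by (intro ftc_nn_ab) auto
  also have "H 1 - H 0 = G d t"
  proof -
    have aux: "c\<noteq>0 \<Longrightarrow> a/(-c) - 1/(-c) = (1-a)/(c::real)" for a c by (simp add: field_simps)
    have "(1-t)*(1-d) \<noteq> 0" using t d by simp
    then show ?thesis unfolding H_def G_def using aux by simp
  qed
  finally show ?thesis .
qed

lemma Yint:
  fixes t :: real
  assumes t: "0 < t" "t < 1"
  shows "(\<integral>\<^sup>+y. ennreal (indicator {t..1} y * y powr (-2/3)) \<partial>lborel) = ennreal (3 * (1 - t powr (1/3)))"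
proof -
  define H where "H y = 3 * y powr (1/3)" for y :: real
  have "(H has_real_derivative y powr (-2/3)) (at y)" if "y \<in> {t..1}" for y
  proof -
    have "y > 0" using that t by auto
    then have "(H has_real_derivative 3 * ((1/3) * y powr (1/3 - 1))) (at y)"
      unfolding H_def by (auto intro!: derivative_eq_intros)
    moreover have "3 * ((1/3) * y powr (1/3 - 1)) = y powr (-2/3)" by simp
    ultimately show ?thesis by (simp only:)
  qed
  then have "(\<integral>\<^sup>+y. ennreal (indicator {t..1} y * y powr (-2/3)) \<partial>lborel) = ennreal (H 1 - H t)"
    using t by (intro ftc_nn_ab) auto
  also have "H 1 - H t = 3 * (1 - t powr (1/3))" unfolding H_def by simp
  finally show ?thesis .
qed

lemma iter3:
  fixes f :: "real \<times> real \<times> real \<Rightarrow> ennreal" assumes [measurable]: "f \<in> borel_measurable borel"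
  shows "(\<integral>\<^sup>+p. f p \<partial>lborel) = (\<integral>\<^sup>+x. \<integral>\<^sup>+y. \<integral>\<^sup>+z. f (x,y,z) \<partial>lborel \<partial>lborel \<partial>lborel)"
proof -
  have "(\<integral>\<^sup>+p. f p \<partial>lborel) = (\<integral>\<^sup>+p. f p \<partial>(lborel \<Otimes>\<^sub>M lborel))"
    by (simp add: lborel_prod)
  also have "\<dots> = (\<integral>\<^sup>+x. \<integral>\<^sup>+q. f (x,q) \<partial>lborel \<partial>lborel)"
    by (rule lborel.nn_integral_fst[symmetric]) (simp add: lborel_prod)
  also have "\<dots> = (\<integral>\<^sup>+x. \<integral>\<^sup>+q. f (x,q) \<partial>(lborel \<Otimes>\<^sub>M lborel) \<partial>lborel)"
    by (simp add: lborel_prod)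
  also have "\<dots> = (\<integral>\<^sup>+x. \<integral>\<^sup>+y. \<integral>\<^sup>+z. f (x,y,z) \<partial>lborel \<partial>lborel \<partial>lborel)"
    by (intro nn_integral_cong lborel.nn_integral_fst[symmetric]) (simp add: lborel_prod)
  finally show ?thesis .
qed

definition Fd :: "real \<Rightarrow> real \<Rightarrow> real \<Rightarrow> real \<Rightarrow> real" where
 "Fd d x y z = x powr 0 * (1 - x) powr 0 * y powr (1/3) * (1 - y) powr 0 * z powr 0 * (1 - z) powr 0 / (1 - z + x * y * z) powr d"

lemma Fd_interior:
  assumes "x \<in> {0<..<1}" "y \<in> {0<..<1}" "z \<in> {0<..<1}"
  shows "Fd d x y z = y powr (1/3) * (1 - (1 - x*y)*z) powr (-d)"
proof -
  have e: "1 - z + x * y * z = 1 - (1 - x*y)*z" by (simp add: algebra_simps)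
  show ?thesis using assms unfolding Fd_def e by (simp add: powr_minus_divide)
qed

lemma stepB:
  fixes d x y :: real
  assumes d: "d \<noteq> 1" and x: "x \<noteq> 0" "x \<noteq> 1" and y: "y \<noteq> 0" "y \<noteq> 1"
  shows "(\<integral>\<^sup>+z. ennreal (indicator ({0..1} \<times> {0..1} \<times> {0..1}) (x,y,z) * Fd d x y z) \<partial>lborel)
     = ennreal (indicator {0<..<1} x * indicator {0<..<1} y * (y powr (1/3) * G d (x*y)))"
proof (cases "x \<in> {0<..<1} \<and> y \<in> {0<..<1}")
  case True
  have t: "0 < x*y" "x*y < 1"
  proof -
    have a: "0 < x*(1-y)" using True by simp
    have "x*(1-y) = x - x*y" by (simp add: algebra_simps)
    moreover have "x < 1" using True by simp
    ultimately show "x*y<1" using a by linarith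
  qed (use True in simp)
  have "(\<integral>\<^sup>+z. ennreal (indicator ({0..1} \<times> {0..1} \<times> {0..1}) (x,y,z) * Fd d x y z) \<partial>lborel)
      = (\<integral>\<^sup>+z. ennreal (y powr (1/3)) * ennreal (indicator {0..1} z * (1 - (1-x*y)*z) powr (-d)) \<partial>lborel)"
  proof (rule nn_integral_cong_AE)
    show "AE z in lborel. ennreal (indicator ({0..1} \<times> {0..1} \<times> {0..1}) (x,y,z) * Fd d x y z) =
       ennreal (y powr (1/3)) * ennreal (indicator {0..1} z * (1 - (1-x*y)*z) powr (-d))"
      using AE_lborel_singleton[of 0] AE_lborel_singleton[of 1]
    proof eventually_elim
      case (elim z)
      show ?case
      proof (cases "z \<in> {0..1}")
        case True
        then have "z \<in> {0<..<1}" using elim by auto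
        then show ?thesis using Fd_interior[of x y z d] \<open>x \<in> {0<..<1} \<and> y \<in> {0<..<1}\<close>
          by (auto simp: indicator_def ennreal_mult[symmetric])
      qed (auto simp: indicator_def)
    qed
  qed
  also have "\<dots> = ennreal (y powr (1/3)) * ennreal (G d (x*y))"
    by (subst nn_integral_cmult) (auto simp: Zint[OF t d])
  also have "\<dots> = ennreal (indicator {0<..<1} x * indicator {0<..<1} y * (y powr (1/3) * G d (x*y)))"
    using True by (simp add: ennreal_mult')
  finally show ?thesis .
next
  case False
  then have "x \<notin> {0..1} \<or> y \<notin> {0..1}" using x y by auto
  then show ?thesis using False by (auto simp: indicator_def)
qed

lemma G_meas[measurable]: "G d \<in> borel_measurable borel"
  unfolding G_def by measurable

lemma G_meas_l[measurable]: "G d \<in> borel_measurable lborel"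
  unfolding G_def by measurable

lemma pred_lt[measurable]: "Measurable.pred (borel \<Otimes>\<^sub>M borel) (\<lambda>x::real\<times>real. fst x \<in> {0<..<snd x})"
  unfolding greaterThanLessThan_iff by measurable

lemma stepC:
  fixes d y :: real
  shows "(\<integral>\<^sup>+x. ennreal (indicator {0<..<1} x * indicator {0<..<1} y * (y powr (1/3) * G d (x*y))) \<partial>lborel)
   = ennreal (indicator {0<..<1} y * y powr (-2/3)) * (\<integral>\<^sup>+t. ennreal (indicator {0<..<y} t * G d t) \<partial>lborel)"
proof (cases "y \<in> {0<..<1}")
  case True
  then have y: "0 < y" "y < 1" by auto
  have "(\<integral>\<^sup>+t. ennreal (indicator {0<..<y} t * G d t) \<partial>lborel)
      = ennreal \<bar>y\<bar> * (\<integral>\<^sup>+x. ennreal (indicator {0<..<y} (0 + y*x) * G d (0 + y*x)) \<partial>lborel)"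
    by (rule nn_integral_real_affine) (use y in auto)
  also have "(\<lambda>x. ennreal (indicator {0<..<y} (0 + y*x) * G d (0 + y*x))) = (\<lambda>x. ennreal (indicator {0<..<1} x * G d (x*y)))"
  proof
    fix x
    have "(0 < y*x \<and> y*x < y) \<longleftrightarrow> (0 < x \<and> x < 1)" using y
      by (simp add: zero_less_mult_iff)
    then show "ennreal (indicator {0<..<y} (0 + y*x) * G d (0 + y*x)) = ennreal (indicator {0<..<1} x * G d (x*y))"
      by (auto simp: indicator_def mult.commute)
  qed
  finally have A: "(\<integral>\<^sup>+t. ennreal (indicator {0<..<y} t * G d t) \<partial>lborel)
      = ennreal y * (\<integral>\<^sup>+x. ennreal (indicator {0<..<1} x * G d (x*y)) \<partial>lborel)" using y by simp
  have "(\<integral>\<^sup>+x. ennreal (indicator {0<..<1} x * indicator {0<..<1} y * (y powr (1/3) * G d (x*y))) \<partial>lborel)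
      = (\<integral>\<^sup>+x. ennreal (y powr (1/3)) * ennreal (indicator {0<..<1} x * G d (x*y)) \<partial>lborel)"
    using True by (intro nn_integral_cong) (auto simp: indicator_def ennreal_mult')
  also have "\<dots> = ennreal (y powr (1/3)) * (\<integral>\<^sup>+x. ennreal (indicator {0<..<1} x * G d (x*y)) \<partial>lborel)"
    by (rule nn_integral_cmult) measurable
  also have "ennreal (y powr (1/3)) = ennreal (y powr (-2/3)) * ennreal y"
  proof -
    have "y powr (1/3) = y powr (-2/3 + 1)" by simp
    also have "\<dots> = y powr (-2/3) * y powr 1" by (rule powr_add)
    also have "\<dots> = y powr (-2/3) * y" using y by simp
    finally show ?thesis using y by (simp add: ennreal_mult)
  qed
  finally show ?thesis using True A by (simp add: mult.assoc)
next
  case False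
  then have "indicator {0<..<1} y = (0::real)" by simp
  then show ?thesis by simp
qed

lemma stepD:
  fixes d t :: real
  shows "(\<integral>\<^sup>+y. ennreal (indicator {0<..<1} y * y powr (-2/3)) * ennreal (indicator {0<..<y} t * G d t) \<partial>lborel)
     = ennreal (indicator {0<..<1} t * (G d t * (3*(1 - t powr (1/3)))))"
proof (cases "t \<in> {0<..<1}")
  case True
  then have t: "0 < t" "t < 1" by auto
  have "(\<integral>\<^sup>+y. ennreal (indicator {0<..<1} y * y powr (-2/3)) * ennreal (indicator {0<..<y} t * G d t) \<partial>lborel)
      = (\<integral>\<^sup>+y. ennreal (G d t) * ennreal (indicator {t..1} y * y powr (-2/3)) \<partial>lborel)"
  proof (rule nn_integral_cong_AE)
    show "AE y in lborel. ennreal (indicator {0<..<1} y * y powr (-2/3)) * ennreal (indicator {0<..<y} t * G d t)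
        = ennreal (G d t) * ennreal (indicator {t..1} y * y powr (-2/3))"
      using AE_lborel_singleton[of t] AE_lborel_singleton[of 1]
    proof eventually_elim
      case (elim y)
      show ?case
      proof (cases "t < y \<and> y < 1")
        case True
        then show ?thesis using t by (auto simp: indicator_def mult.commute)
      next
        case False
        then have "y < t \<or> y > 1" using elim by auto
        then show ?thesis using t by (auto simp: indicator_def)
      qed
    qed
  qed
  also have "\<dots> = ennreal (G d t) * ennreal (3 * (1 - t powr (1/3)))"
    using Yint[OF t] by (subst nn_integral_cmult) auto
  also have "\<dots> = ennreal (indicator {0<..<1} t * (G d t * (3*(1 - t powr (1/3)))))"
  proof -
    have "t powr (1/3) \<le> 1" using t by (intro powr_le1) auto
    then show ?thesis using True by (simp add: ennreal_mult'')
  qed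
  finally show ?thesis .
next
  case False
  have Z: "(\<lambda>y. ennreal (indicator {0<..<1} y * y powr (-2/3)) * ennreal (indicator {0<..<y} t * G d t)) = (\<lambda>y. 0)"
    using False by (intro ext) (auto simp: indicator_def)
  have "indicator {0<..<1} t = (0::real)" using False by simp
  then show ?thesis by (simp only: Z) simp
qed

lemma reduce:
  fixes d :: real assumes d: "d \<noteq> 1"
  shows "(\<integral>\<^sup>+p. ennreal (indicator ({0..1} \<times> {0..1} \<times> {0..1}) p * (case p of (x,y,z) \<Rightarrow> Fd d x y z)) \<partial>lborel)
    = (\<integral>\<^sup>+t. ennreal (indicator {0<..<1} t * (G d t * (3*(1 - t powr (1/3))))) \<partial>lborel)"
proof -
  let ?S = "{0..1} \<times> {0..1} \<times> {0..1} :: (real \<times> real \<times> real) set"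
  have Sb: "?S \<in> sets borel" by (intro borel_closed closed_Times) auto
  have "(\<lambda>p. Fd d (fst p) (fst (snd p)) (snd (snd p))) \<in> borel_measurable (borel \<Otimes>\<^sub>M (borel \<Otimes>\<^sub>M borel))"
    unfolding Fd_def by measurable
  then have "(\<lambda>p. Fd d (fst p) (fst (snd p)) (snd (snd p))) \<in> borel_measurable borel"
    by (simp add: borel_prod)
  moreover have "(\<lambda>p. Fd d (fst p) (fst (snd p)) (snd (snd p))) = (\<lambda>(x,y,z). Fd d x y z)"
    by (auto simp: split_beta)
  ultimately have Fm[measurable]: "(\<lambda>(x,y,z). Fd d x y z) \<in> borel_measurable borel" by simp
  have "(\<integral>\<^sup>+p. ennreal (indicator ?S p * (case p of (x,y,z) \<Rightarrow> Fd d x y z)) \<partial>lborel)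
     = (\<integral>\<^sup>+x. \<integral>\<^sup>+y. \<integral>\<^sup>+z. ennreal (indicator ?S (x,y,z) * Fd d x y z) \<partial>lborel \<partial>lborel \<partial>lborel)"
  proof (subst iter3)
    show "(\<lambda>p. ennreal (indicator ?S p * (case p of (x,y,z) \<Rightarrow> Fd d x y z))) \<in> borel_measurable borel"
      by (intro measurable_compose[OF _ measurable_ennreal] borel_measurable_times borel_measurable_indicator Sb Fm)
  qed simp
  also have "\<dots> = (\<integral>\<^sup>+x. \<integral>\<^sup>+y. ennreal (indicator {0<..<1} x * indicator {0<..<1} y * (y powr (1/3) * G d (x*y))) \<partial>lborel \<partial>lborel)"
  proof (rule nn_integral_cong_AE)
    show "AE x in lborel. (\<integral>\<^sup>+y. \<integral>\<^sup>+z. ennreal (indicator ?S (x,y,z) * Fd d x y z) \<partial>lborel \<partial>lborel)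
       = (\<integral>\<^sup>+y. ennreal (indicator {0<..<1} x * indicator {0<..<1} y * (y powr (1/3) * G d (x*y))) \<partial>lborel)"
      using AE_lborel_singleton[of 0] AE_lborel_singleton[of 1]
    proof eventually_elim
      case (elim x)
      show ?case
      proof (rule nn_integral_cong_AE)
        show "AE y in lborel. (\<integral>\<^sup>+z. ennreal (indicator ?S (x,y,z) * Fd d x y z) \<partial>lborel)
           = ennreal (indicator {0<..<1} x * indicator {0<..<1} y * (y powr (1/3) * G d (x*y)))"
          using AE_lborel_singleton[of 0] AE_lborel_singleton[of 1]
          by eventually_elim (rule stepB, use d elim in auto)
      qed
    qed
  qed
  also have "\<dots> = (\<integral>\<^sup>+y. \<integral>\<^sup>+x. ennreal (indicator {0<..<1} x * indicator {0<..<1} y * (y powr (1/3) * G d (x*y))) \<partial>lborel \<partial>lborel)"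
    by (rule lborel_pair.Fubini'[symmetric]) measurable
  also have "\<dots> = (\<integral>\<^sup>+y. ennreal (indicator {0<..<1} y * y powr (-2/3)) * (\<integral>\<^sup>+t. ennreal (indicator {0<..<y} t * G d t) \<partial>lborel) \<partial>lborel)"
    by (rule nn_integral_cong) (rule stepC)
  also have "\<dots> = (\<integral>\<^sup>+y. \<integral>\<^sup>+t. ennreal (indicator {0<..<1} y * y powr (-2/3)) * ennreal (indicator {0<..<y} t * G d t) \<partial>lborel \<partial>lborel)"
    by (rule nn_integral_cong) (rule nn_integral_cmult[symmetric], measurable)
  also have "\<dots> = (\<integral>\<^sup>+t. \<integral>\<^sup>+y. ennreal (indicator {0<..<1} y * y powr (-2/3)) * ennreal (indicator {0<..<y} t * G d t) \<partial>lborel \<partial>lborel)"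
    by (rule lborel_pair.Fubini') measurable
  also have "\<dots> = (\<integral>\<^sup>+t. ennreal (indicator {0<..<1} t * (G d t * (3*(1 - t powr (1/3))))) \<partial>lborel)"
    by (rule nn_integral_cong) (rule stepD)
  finally show ?thesis .
qed

lemma subst3:
  fixes W R :: "real \<Rightarrow> real"
  assumes [measurable]: "W \<in> borel_measurable borel"
    and R: "\<And>s. s \<in> {0<..<1} \<Longrightarrow> W (s^3) * (3 * s^2) = R s"
  shows "(\<integral>\<^sup>+t. ennreal (indicator {0<..<1} t * W t) \<partial>lborel) = (\<integral>\<^sup>+s. ennreal (indicator {0..1} s * R s) \<partial>lborel)"
proof -
  have "(\<integral>\<^sup>+t. ennreal (indicator {0<..<1} t * W t) \<partial>lborel) = (\<integral>\<^sup>+t. ennreal (W t * indicator {0..1} t) \<partial>lborel)"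
    by (rule nn_integral_cong_AE)
       (use AE_lborel_singleton[of 0] AE_lborel_singleton[of 1] in \<open>eventually_elim, auto simp: indicator_def\<close>)
  also have "\<dots> = (\<integral>\<^sup>+s. ennreal (W (s^3) * (3 * s^2) * indicator {0..1} s) \<partial>lborel)"
  proof -
    have m: "set_borel_measurable borel {0..1} W" unfolding set_borel_measurable_def by measurable
    have dv: "((\<lambda>s. s ^ 3) has_real_derivative 3 * x\<^sup>2) (at x)" for x :: real
      by (auto intro!: derivative_eq_intros)
    have ct: "continuous_on {0..1} (\<lambda>s::real. 3 * s\<^sup>2)" by (intro continuous_intros)
    show ?thesis
      using nn_integral_substitution[of "\<lambda>s. s^3" 0 1 W "\<lambda>s. 3 * s^2"] m dv ct by simp
  qed
  also have "\<dots> = (\<integral>\<^sup>+s. ennreal (indicator {0..1} s * R s) \<partial>lborel)"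
    by (rule nn_integral_cong_AE)
       (use AE_lborel_singleton[of 0] AE_lborel_singleton[of 1] in \<open>eventually_elim, auto simp: indicator_def R\<close>)
  finally show ?thesis .
qed

lemma cube_powr:
  assumes "0 < (s::real)" shows "(s^3) powr (r::real) = s powr (3*r)"
proof -
  have "s powr (real 3) = s^3" using assms by (rule powr_realpow)
  then have "s^3 = s powr 3" by simp
  then show ?thesis by (simp add: powr_powr)
qed

lemma final23: "(\<integral>\<^sup>+t. ennreal (indicator {0<..<1} t * (G (2/3) t * (3*(1 - t powr (1/3))))) \<partial>lborel) = ennreal (27*(3-K1)/2)"
proof -
  have "(\<integral>\<^sup>+t. ennreal (indicator {0<..<1} t * (G (2/3) t * (3*(1 - t powr (1/3))))) \<partial>lborel)
      = (\<integral>\<^sup>+s. ennreal (indicator {0..1} s * (27 * s^2 * (1-s) / (s^2+s+1))) \<partial>lborel)"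
  proof (rule subst3)
    show "(\<lambda>t. G (2/3) t * (3*(1 - t powr (1/3)))) \<in> borel_measurable borel" by measurable
  next
    fix s :: real assume s: "s \<in> {0<..<1}"
    have c: "(s^3) powr (1/3) = s" using s by (simp add: cube_powr)
    have f: "1 - s^3 = (1-s)*(s^2+s+1)" by (simp add: algebra_simps power2_eq_square power3_eq_cube)
    have nz: "1 - s \<noteq> 0" "s^2+s+1 \<noteq> 0" using s pos3[of s] by auto
    show "G (2/3) (s^3) * (3*(1 - (s^3) powr (1/3))) * (3 * s^2) = 27 * s^2 * (1-s) / (s^2+s+1)"
    proof -
      have e: "(1::real) - 2/3 = 1/3" by simp
      have g: "G (2/3) (s^3) = (1 - s) / ((1-s)*(s^2+s+1)*(1/3))"
        unfolding G_def e c f ..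
      also have "\<dots> = 3 / (s^2+s+1)"
      proof -
        have aux: "a \<noteq> 0 \<Longrightarrow> q \<noteq> 0 \<Longrightarrow> a/(a*q*(1/3)) = 3/(q::real)" for a q by (simp add: field_simps)
        show ?thesis using aux nz by blast
      qed
      finally show ?thesis unfolding c using nz by (simp add: field_simps)
    qed
  qed
  also have "\<dots> = ennreal (27*(3-K1)/2)" using I1 by simp
  finally show ?thesis .
qed

lemma final53: "(\<integral>\<^sup>+t. ennreal (indicator {0<..<1} t * (G (5/3) t * (3*(1 - t powr (1/3))))) \<partial>lborel) = ennreal (27*(K1-2)/4)"
proof -
  have "(\<integral>\<^sup>+t. ennreal (indicator {0<..<1} t * (G (5/3) t * (3*(1 - t powr (1/3))))) \<partial>lborel)
      = (\<integral>\<^sup>+s. ennreal (indicator {0..1} s * (27/2 * (1 - s^2) / (s^2+s+1))) \<partial>lborel)"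
  proof (rule subst3)
    show "(\<lambda>t. G (5/3) t * (3*(1 - t powr (1/3)))) \<in> borel_measurable borel" by measurable
  next
    fix s :: real assume s: "s \<in> {0<..<1}"
    have c: "(s^3) powr (1/3) = s" using s by (simp add: cube_powr)
    have c2: "(s^3) powr (1 - 5/3) = 1/s^2"
    proof -
      have "(s^3) powr (1 - 5/3) = s powr (-2)" using s by (simp add: cube_powr)
      also have "\<dots> = 1/s^2"
      proof -
        have sp: "0 < s" using s by simp
        have "s powr (real 2) = s^2" by (rule powr_realpow[OF sp])
        then have "s powr 2 = s^2" by simp
        then show ?thesis by (simp add: powr_minus_divide)
      qed
      finally show ?thesis .
    qed
    have f: "1 - s^3 = (1-s)*(s^2+s+1)" by (simp add: algebra_simps power2_eq_square power3_eq_cube)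
    have nz: "1 - s \<noteq> 0" "s^2+s+1 \<noteq> 0" "s \<noteq> 0" using s pos3[of s] by auto
    show "G (5/3) (s^3) * (3*(1 - (s^3) powr (1/3))) * (3 * s^2) = 27/2 * (1 - s^2) / (s^2+s+1)"
    proof -
      have e: "(1::real) - 5/3 = -2/3" by simp
      have g1: "G (5/3) (s^3) = (1 - 1/s^2) / ((1-s)*(s^2+s+1)*(-2/3))"
      proof -
        have c2': "(s^3) powr (-2/3) = 1/s^2" using c2 e by simp
        show ?thesis unfolding G_def e c2' f ..
      qed
      have g2: "1 - 1/s^2 = -((1-s)*(1+s))/s^2" using nz by (simp add: field_simps power2_eq_square)
      have aux: "a \<noteq> 0 \<Longrightarrow> q \<noteq> 0 \<Longrightarrow> t \<noteq> 0 \<Longrightarrow> (-(a*b)/t)/(a*q*(-2/3)) = 3*b/(2*t*(q::real))" for a b q t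
        by (simp add: field_simps)
      have g: "G (5/3) (s^3) = 3*(1+s)/(2 * s^2 * (s^2+s+1))"
        unfolding g1 g2 by (rule aux) (use nz in auto)
      have aux2: "t \<noteq> 0 \<Longrightarrow> q \<noteq> 0 \<Longrightarrow> 3*b/(2*t*q) * (3*(1-s)) * (3*t) = 27/2 * ((1-s)*b)/(q::real)" for b q t
        by (simp add: field_simps)
      have h': "(1-s)*(1+s) = 1 - s^2" by (simp add: algebra_simps power2_eq_square)
      have "3*(1+s)/(2 * s^2 * (s^2+s+1)) * (3*(1-s)) * (3 * s^2) = 27/2 * ((1-s)*(1+s))/(s^2+s+1)"
        by (rule aux2) (use nz in auto)
      then show ?thesis unfolding g c h' .
    qed
  qed
  also have "\<dots> = ennreal (27*(K1-2)/4)" using I2 by simp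
  finally show ?thesis .
qed

lemma integrand_meas:
  "(\<lambda>p. indicator ({0..1} \<times> {0..1} \<times> {0..1}) p * (case p of (x,y,z) \<Rightarrow> Fd d x y z)) \<in> borel_measurable borel"
proof -
  let ?S = "{0..1} \<times> {0..1} \<times> {0..1} :: (real \<times> real \<times> real) set"
  have Sb: "?S \<in> sets borel" by (intro borel_closed closed_Times) auto
  have "(\<lambda>p. Fd d (fst p) (fst (snd p)) (snd (snd p))) \<in> borel_measurable (borel \<Otimes>\<^sub>M (borel \<Otimes>\<^sub>M borel))"
    unfolding Fd_def by measurable
  then have "(\<lambda>p. Fd d (fst p) (fst (snd p)) (snd (snd p))) \<in> borel_measurable borel"
    by (simp add: borel_prod)
  moreover have "(\<lambda>p. Fd d (fst p) (fst (snd p)) (snd (snd p))) = (\<lambda>(x,y,z). Fd d x y z)"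
    by (auto simp: split_beta)
  ultimately have Fm: "(\<lambda>(x,y,z). Fd d x y z) \<in> borel_measurable borel" by simp
  show ?thesis by (intro borel_measurable_times borel_measurable_indicator Sb Fm)
qed

lemma J3_value:
  assumes d: "d \<noteq> 1"
    and V: "(\<integral>\<^sup>+t. ennreal (indicator {0<..<1} t * (G d t * (3*(1 - t powr (1/3))))) \<partial>lborel) = ennreal V" "0 \<le> V"
  shows "J3 0 0 0 d (1/3) = V"
proof -
  let ?f = "\<lambda>p. indicator ({0..1} \<times> {0..1} \<times> {0..1}) p * (case p of (x,y,z) \<Rightarrow> Fd d x y z)"
  have J: "J3 0 0 0 d (1/3) = integral\<^sup>L lborel ?f"
    unfolding J3_def Fd_def set_lebesgue_integral_def by simp
  have "has_bochner_integral lborel ?f V"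
  proof (rule has_bochner_integral_nn_integral)
    show "?f \<in> borel_measurable lborel" using integrand_meas by simp
    show "AE x in lborel. 0 \<le> ?f x"
      by (intro AE_I2) (auto simp: Fd_def split: prod.splits)
    show "0 \<le> V" by (rule V(2))
    show "(\<integral>\<^sup>+x. ennreal (?f x) \<partial>lborel) = ennreal V"
      using reduce[OF d] V(1) by simp
  qed
  then show ?thesis using J by (simp add: has_bochner_integral_integral_eq)
qed

theorem mainTheorem2:
  shows "K 0 0 0 (2/3) (1/3) = - (K1 - 2) / (2 * (K1 - 3))"
proof -
  have a: "J3 0 0 0 (2/3) (1/3) = 27*(3-K1)/2"
  proof -
    have n: "0 \<le> 27*(3-K1)/2" using I1 by blast
    show ?thesis by (rule J3_value[OF _ final23 n]) simp
  qed
  have e: "(2/3::real) + 1 = 5/3" by simp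
  have b: "J3 0 0 0 (5/3) (1/3) = 27*(K1-2)/4"
  proof -
    have n: "0 \<le> 27*(K1-2)/4" using I2 by blast
    show ?thesis by (rule J3_value[OF _ final53 n]) simp
  qed
  have "K 0 0 0 (2/3) (1/3) = (27*(K1-2)/4) / (27*(3-K1)/2)"
    unfolding K_def e a b ..
  also have "\<dots> = - (K1 - 2) / (2 * (K1 - 3))"
    by (cases "K1 = 3") (auto simp: field_simps)
  finally show ?thesis .
qed
end
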